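(* Consider the tabular parametrization $\theta=\pi\in\Delta_{\mathcal A}^{\mathcal S}$, $\lambda(\theta)=\Lambda(\pi)$, and suppose $\xi_s>0$ for all $s$. Let $F$ be concave on an open neighbourhood of $\mathcal L$ and suppose $R(\pi):=F(\Lambda(\pi))$ is differentiable on $\Delta_{\mathcal A}^{\mathcal S}$ with $L$-Lipschitz gradient $\nabla_\pi R$. Let $\pi^*$ be a global maximizer of $R$ over $\Delta_{\mathcal A}^{\mathcal S}$, $\pi^0\in\Delta_{\mathcal A}^{\mathcal S}$, and $\pi^{k+1}=\mathrm{Proj}_{\Delta_{\mathcal A}^{\mathcal S}}\{\pi^k+\frac1L\nabla_\pi R(\pi^k)\}$. Then for all $k\ge1$, $$R(\pi^* )-R(\pi^k)\le\frac{20L|\mathcal S|}{(1-\gamma)^2(k+1)}\Big\|d^{\pi^*}_\xi/\xi\Big\|_\infty^2.$$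
   Context: Finite MDP with states $\mathcal S$, actions $\mathcal A$, transition matrices $P_a$, initial distribution $\xi$, discount $\gamma\in(0,1)$. $\Delta_{\mathcal A}^{\mathcal S}$ is the set of tabular policies ($\pi(\cdot|s)$ a probability distribution on $\mathcal A$ for each $s$). $\Lambda_{sa}(\pi)=\sum_{t\ge0}\gamma^t\mathbb P(s_t=s,a_t=a\mid\pi,s_0\sim\xi)$ is the occupancy measure, and $\mathcal L=\{\lambda\ge0:\sum_a(I-\gamma P_a^\top)\lambda_a=\xi\}=\Lambda(\Delta_{\mathcal A}^{\mathcal S})$. The discounted state visitation distribution is $d^\pi_\xi(s)=(1-\gamma)\sum_{t\ge0}\gamma^t\mathbb P(s_t=s\mid\pi,s_0\sim\xi)$; $d^{\pi^*}_\xi/\xi$ is the componentwise ratio. $\mathrm{Proj}$ is Euclidean projection. *)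

theory Defs
  imports "HOL-Analysis.Analysis"
begin

text \<open>Transition kernel P a s s' =
  probability of moving from s to s' under action a (so P_a is the matrix with rows s).
  A tabular policy is a vector \<pi> in real^('s x 'a), \<pi> $ (s,a) = \<pi>(a|s).\<close>

definition policies :: "(real^('s::finite \<times> 'a::finite)) set" where
  "policies = {\<pi>. (\<forall>s a. 0 \<le> \<pi> $ (s,a)) \<and> (\<forall>s. (\<Sum>a\<in>UNIV. \<pi> $ (s,a)) = 1)}"

text \<open>State distribution at time t: mu_t(s) = P(s_t = s | \<pi>, s_0 ~ xi).\<close>
primrec state_dist :: "('a::finite \<Rightarrow> 's::finite \<Rightarrow> 's \<Rightarrow> real) \<Rightarrow> ('s \<Rightarrow> real)
    \<Rightarrow> real^('s \<times> 'a) \<Rightarrow> nat \<Rightarrow> 's \<Rightarrow> real" where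
  "state_dist P xi \<pi> 0 = xi"
| "state_dist P xi \<pi> (Suc t) =
     (\<lambda>s'. \<Sum>s\<in>UNIV. \<Sum>a\<in>UNIV. state_dist P xi \<pi> t s * \<pi> $ (s,a) * P a s s')"

definition occupancy :: "('a::finite \<Rightarrow> 's::finite \<Rightarrow> 's \<Rightarrow> real) \<Rightarrow> ('s \<Rightarrow> real) \<Rightarrow> real
    \<Rightarrow> real^('s \<times> 'a) \<Rightarrow> real^('s \<times> 'a)" where
  "occupancy P xi \<gamma> \<pi> = (\<chi> i. (\<Sum>t. \<gamma> ^ t * (state_dist P xi \<pi> t (fst i) * \<pi> $ i)))"

definition visitation :: "('a::finite \<Rightarrow> 's::finite \<Rightarrow> 's \<Rightarrow> real) \<Rightarrow> ('s \<Rightarrow> real) \<Rightarrow> real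
    \<Rightarrow> real^('s \<times> 'a) \<Rightarrow> 's \<Rightarrow> real" where
  "visitation P xi \<gamma> \<pi> s = (1 - \<gamma>) * (\<Sum>t. \<gamma> ^ t * state_dist P xi \<pi> t s)"

definition occ_polytope :: "('a::finite \<Rightarrow> 's::finite \<Rightarrow> 's \<Rightarrow> real) \<Rightarrow> ('s \<Rightarrow> real) \<Rightarrow> real
    \<Rightarrow> (real^('s \<times> 'a)) set" where
  "occ_polytope P xi \<gamma> = {lam. (\<forall>i. 0 \<le> lam $ i) \<and>
     (\<forall>s'. (\<Sum>a\<in>UNIV. lam $ (s',a)) - \<gamma> * (\<Sum>s\<in>UNIV. \<Sum>a\<in>UNIV. P a s s' * lam $ (s,a)) = xi s')}"

end

theory Submission imports Defs begin


lemma sum_pairs: "(\<Sum>i\<in>(UNIV::('s::finite\<times>'a::finite) set). f i) = (\<Sum>s\<in>UNIV. \<Sum>a\<in>UNIV. f (s,a))"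
  using sum.cartesian_product[of "\<lambda>s a. f (s,a)" UNIV UNIV] by simp

lemma inner_pairs: "(x::real^('s::finite\<times>'a::finite)) \<bullet> y = (\<Sum>s\<in>UNIV. \<Sum>a\<in>UNIV. x$(s,a) * y$(s,a))"
  by (simp add: inner_vec_def sum_pairs)

lemma policiesD: "\<pi> \<in> policies \<Longrightarrow> 0 \<le> \<pi> $ (s,a)" "\<pi> \<in> policies \<Longrightarrow> (\<Sum>a\<in>UNIV. \<pi> $ (s,a)) = 1"
  by (auto simp: policies_def)

lemma policies_le1: assumes "\<pi> \<in> policies" shows "\<pi> $ (s,a) \<le> 1"
proof -
  have "\<pi> $ (s,a) \<le> (\<Sum>b\<in>UNIV. \<pi> $ (s,b))"
    by (rule member_le_sum) (auto simp: policiesD[OF assms])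
  thus ?thesis using policiesD[OF assms] by simp
qed

lemma policies_closed: "closed (policies :: (real^('s::finite\<times>'a::finite)) set)"
proof -
  have "policies = (\<Inter>i. {\<pi>::real^('s\<times>'a). 0 \<le> \<pi> $ i}) \<inter> (\<Inter>s. {\<pi>. (\<Sum>a\<in>UNIV. \<pi> $ (s,a)) = 1})"
    by (auto simp: policies_def)
  also have "closed \<dots>"
    by (intro closed_Int closed_INT ballI closed_Collect_le closed_Collect_eq continuous_intros)
  finally show ?thesis .
qed

lemma policies_convex: "convex (policies :: (real^('s::finite\<times>'a::finite)) set)"
  unfolding convex_def
proof (intro ballI allI impI)
  fix x y :: "real^('s\<times>'a)" and u v :: real
  assume x: "x \<in> policies" and y: "y \<in> policies" and uv: "0 \<le> u" "0 \<le> v" "u + v = 1"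
  show "u *\<^sub>R x + v *\<^sub>R y \<in> policies"
    unfolding policies_def using policiesD[OF x] policiesD[OF y] uv
    by (auto simp: sum.distrib sum_distrib_left[symmetric])
qed

lemma policies_nonempty: "(policies :: (real^('s::finite\<times>'a::finite)) set) \<noteq> {}"
proof -
  have "(\<chi> i. 1 / real CARD('a)) \<in> (policies :: (real^('s\<times>'a)) set)"
    by (auto simp: policies_def)
  thus ?thesis by blast
qed

lemma policies_diam: fixes p q :: "real^('s::finite\<times>'a::finite)"
  assumes "p \<in> policies" "q \<in> policies"
  shows "(norm (p - q))^2 \<le> 2 * real CARD('s)"
proof -
  have "(norm (p - q))^2 = (\<Sum>s\<in>UNIV. \<Sum>a\<in>UNIV. (p$(s,a) - q$(s,a))^2)"
    by (simp only: power2_norm_eq_inner inner_pairs) (simp add: power2_eq_square)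
  also have "\<dots> \<le> (\<Sum>s\<in>(UNIV::'s set). 2)"
  proof (rule sum_mono)
    fix s :: 's
    have "(\<Sum>a\<in>(UNIV::'a set). (p$(s,a) - q$(s,a))^2) \<le> (\<Sum>a\<in>UNIV. p$(s,a) + q$(s,a))"
    proof (rule sum_mono)
      fix a :: 'a
      have "0 \<le> p$(s,a)" "p$(s,a) \<le> 1" "0 \<le> q$(s,a)" "q$(s,a) \<le> 1"
        using policiesD policies_le1 assms by auto
      thus "(p$(s,a) - q$(s,a))^2 \<le> p$(s,a) + q$(s,a)"
      proof -
        have "p$(s,a) * p$(s,a) \<le> p$(s,a)" using mult_left_mono[of "p$(s,a)" 1 "p$(s,a)"] \<open>p$(s,a) \<le> 1\<close> \<open>0 \<le> p$(s,a)\<close> by simp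
        moreover have "q$(s,a) * q$(s,a) \<le> q$(s,a)" using mult_left_mono[of "q$(s,a)" 1 "q$(s,a)"] \<open>q$(s,a) \<le> 1\<close> \<open>0 \<le> q$(s,a)\<close> by simp
        moreover have "0 \<le> p$(s,a) * q$(s,a)" using \<open>0 \<le> p$(s,a)\<close> \<open>0 \<le> q$(s,a)\<close> by simp
        moreover have "(p$(s,a) - q$(s,a))^2 = p$(s,a) * p$(s,a) + q$(s,a) * q$(s,a) - 2 * (p$(s,a) * q$(s,a))"
          by (simp add: power2_eq_square algebra_simps)
        ultimately show ?thesis by linarith
      qed
    qed
    also have "\<dots> = 2" using policiesD(2)[OF assms(1)] policiesD(2)[OF assms(2)] by (simp add: sum.distrib)
    finally show "(\<Sum>a\<in>UNIV. (p$(s,a) - q$(s,a))^2) \<le> 2" .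
  qed
  finally show ?thesis by simp
qed



lemma sum_swap3: "(\<Sum>s'\<in>A. \<Sum>s\<in>B. \<Sum>a\<in>C. f s a s') = (\<Sum>s\<in>B. \<Sum>a\<in>C. \<Sum>s'\<in>A. (f s a s' :: real))"
  by (simp add: sum.swap[of _ A] sum.swap[of _ A C])

locale mdp =
  fixes P :: "'a::finite \<Rightarrow> 's::finite \<Rightarrow> 's \<Rightarrow> real" and xi :: "'s \<Rightarrow> real" and \<gamma> :: real
  assumes P_nonneg: "\<And>a s s'. 0 \<le> P a s s'"
    and P_stoch: "\<And>a s. (\<Sum>s'\<in>UNIV. P a s s') = 1"
    and xi_pos: "\<And>s. 0 < xi s"
    and xi_sum: "(\<Sum>s\<in>UNIV. xi s) = 1"
    and gamma: "0 < \<gamma>" "\<gamma> < 1"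
begin

abbreviation mu where "mu \<pi> t s \<equiv> state_dist P xi \<pi> t s"

definition marg :: "real^('s\<times>'a) \<Rightarrow> 's \<Rightarrow> real" where
  "marg \<pi> s = (\<Sum>t. \<gamma> ^ t * mu \<pi> t s)"

lemma sd_nonneg: "\<pi> \<in> policies \<Longrightarrow> 0 \<le> mu \<pi> t s"
proof (induction t arbitrary: s)
  case 0 then show ?case using xi_pos[of s] by simp
next
  case (Suc t) then show ?case
    by (auto intro!: sum_nonneg mult_nonneg_nonneg P_nonneg policiesD)
qed

lemma sd_sum: "\<pi> \<in> policies \<Longrightarrow> (\<Sum>s\<in>UNIV. mu \<pi> t s) = 1"
proof (induction t)
  case 0 then show ?case using xi_sum by simp
next
  case (Suc t)
  have "(\<Sum>s'\<in>UNIV. mu \<pi> (Suc t) s') = (\<Sum>s\<in>UNIV. \<Sum>a\<in>UNIV. \<Sum>s'\<in>UNIV. mu \<pi> t s * \<pi> $ (s,a) * P a s s')"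
    by (simp only: state_dist.simps(2)) (rule sum_swap3)
  also have "\<dots> = (\<Sum>s\<in>UNIV. \<Sum>a\<in>UNIV. mu \<pi> t s * \<pi> $ (s,a))"
    by (simp add: sum_distrib_left[symmetric] P_stoch)
  also have "\<dots> = (\<Sum>s\<in>UNIV. mu \<pi> t s)"
    using policiesD(2)[OF Suc.prems] by (simp add: sum_distrib_left[symmetric])
  finally show ?case using Suc by simp
qed

lemma sd_le1: assumes "\<pi> \<in> policies" shows "mu \<pi> t s \<le> 1"
proof -
  have "mu \<pi> t s \<le> (\<Sum>s\<in>UNIV. mu \<pi> t s)"
    by (rule member_le_sum) (auto simp: sd_nonneg[OF assms])
  thus ?thesis using sd_sum[OF assms] by simp
qed

lemma sd_sums: assumes "\<pi> \<in> policies" shows "(\<lambda>t. \<gamma> ^ t * mu \<pi> t s) sums marg \<pi> s"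
proof -
  have "summable (\<lambda>t. \<gamma> ^ t * mu \<pi> t s)"
  proof (rule summable_comparison_test)
    show "\<exists>N. \<forall>n\<ge>N. norm (\<gamma> ^ n * mu \<pi> n s) \<le> \<gamma> ^ n"
      using sd_nonneg[OF assms] sd_le1[OF assms] gamma
      by (auto intro!: exI[of _ 0] mult_left_le simp: abs_mult)
    show "summable (\<lambda>n. \<gamma> ^ n)" using gamma by (auto intro!: summable_geometric)
  qed
  thus ?thesis unfolding marg_def by (simp add: summable_sums)
qed

lemma marg_nonneg: "\<pi> \<in> policies \<Longrightarrow> 0 \<le> marg \<pi> s"
  unfolding marg_def using sd_sums[of \<pi> s] sd_nonneg[of \<pi>] gamma
  by (intro suminf_nonneg) (auto simp: sums_iff)

lemma occ_eq: assumes "\<pi> \<in> policies"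
  shows "occupancy P xi \<gamma> \<pi> $ (s,a) = marg \<pi> s * \<pi> $ (s,a)"
proof -
  have "(\<lambda>t. \<gamma> ^ t * mu \<pi> t s * \<pi> $ (s,a)) sums (marg \<pi> s * \<pi> $ (s,a))"
    by (rule sums_mult2[OF sd_sums[OF assms]])
  thus ?thesis unfolding occupancy_def by (simp add: sums_iff mult.assoc)
qed

lemma visit_eq: "visitation P xi \<gamma> \<pi> s = (1 - \<gamma>) * marg \<pi> s"
  by (simp add: visitation_def marg_def)

lemma marg_eq: assumes "\<pi> \<in> policies"
  shows "marg \<pi> s' = xi s' + \<gamma> * (\<Sum>s\<in>UNIV. \<Sum>a\<in>UNIV. marg \<pi> s * \<pi> $ (s,a) * P a s s')"
proof -
  let ?f = "\<lambda>t. \<gamma> ^ t * mu \<pi> t s'"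
  have "(\<lambda>t. \<Sum>s\<in>UNIV. \<Sum>a\<in>UNIV. \<gamma> ^ t * mu \<pi> t s * (\<pi> $ (s,a) * P a s s'))
      sums (\<Sum>s\<in>UNIV. \<Sum>a\<in>UNIV. marg \<pi> s * (\<pi> $ (s,a) * P a s s'))"
    by (intro sums_sum sums_mult2 sd_sums assms)
  hence "(\<lambda>t. \<gamma> * (\<Sum>s\<in>UNIV. \<Sum>a\<in>UNIV. \<gamma> ^ t * mu \<pi> t s * (\<pi> $ (s,a) * P a s s')))
      sums (\<gamma> * (\<Sum>s\<in>UNIV. \<Sum>a\<in>UNIV. marg \<pi> s * (\<pi> $ (s,a) * P a s s')))"
    by (rule sums_mult)
  moreover have "(\<lambda>t. \<gamma> * (\<Sum>s\<in>UNIV. \<Sum>a\<in>UNIV. \<gamma> ^ t * mu \<pi> t s * (\<pi> $ (s,a) * P a s s')))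
      = (\<lambda>t. ?f (Suc t))"
    by (simp add: sum_distrib_left mult.assoc mult.left_commute)
  ultimately have h: "(\<lambda>t. ?f (Suc t)) sums (\<gamma> * (\<Sum>s\<in>UNIV. \<Sum>a\<in>UNIV. marg \<pi> s * (\<pi> $ (s,a) * P a s s')))"
    by simp
  have "?f sums (\<gamma> * (\<Sum>s\<in>UNIV. \<Sum>a\<in>UNIV. marg \<pi> s * (\<pi> $ (s,a) * P a s s')) + ?f 0)"
    using sums_Suc_iff[of ?f "\<gamma> * (\<Sum>s\<in>UNIV. \<Sum>a\<in>UNIV. marg \<pi> s * (\<pi> $ (s,a) * P a s s'))"] h
    by blast
  hence "marg \<pi> s' = \<gamma> * (\<Sum>s\<in>UNIV. \<Sum>a\<in>UNIV. marg \<pi> s * (\<pi> $ (s,a) * P a s s')) + xi s'"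
    using sums_unique2[OF _ sd_sums[OF assms]] by simp
  thus ?thesis by (simp add: mult.assoc)
qed

lemma marg_ge: assumes "\<pi> \<in> policies" shows "xi s \<le> marg \<pi> s"
proof -
  have "0 \<le> (\<Sum>s'\<in>UNIV. \<Sum>a\<in>UNIV. marg \<pi> s' * \<pi> $ (s',a) * P a s' s)"
    by (intro sum_nonneg mult_nonneg_nonneg marg_nonneg policiesD P_nonneg assms)
  thus ?thesis using marg_eq[OF assms, of s] gamma by (simp add: mult_nonneg_nonneg)
qed

lemma occ_in: assumes "\<pi> \<in> policies" shows "occupancy P xi \<gamma> \<pi> \<in> occ_polytope P xi \<gamma>"
  unfolding occ_polytope_def
proof (intro CollectI conjI allI)
  fix i :: "'s\<times>'a"
  obtain s a where i: "i = (s,a)" by (cases i)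
  show "0 \<le> occupancy P xi \<gamma> \<pi> $ i"
    unfolding i using occ_eq[OF assms, of s a] marg_nonneg[OF assms] policiesD(1)[OF assms]
    by simp
next
  fix s'
  have "(\<Sum>a\<in>UNIV. occupancy P xi \<gamma> \<pi> $ (s', a)) = marg \<pi> s'"
    using policiesD(2)[OF assms] by (simp add: occ_eq[OF assms] sum_distrib_left[symmetric])
  moreover have "(\<Sum>s\<in>UNIV. \<Sum>a\<in>UNIV. P a s s' * occupancy P xi \<gamma> \<pi> $ (s, a))
     = (\<Sum>s\<in>UNIV. \<Sum>a\<in>UNIV. marg \<pi> s * \<pi> $ (s,a) * P a s s')"
    by (simp add: occ_eq[OF assms] mult.commute)
  ultimately show "(\<Sum>a\<in>UNIV. occupancy P xi \<gamma> \<pi> $ (s', a)) -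
          \<gamma> * (\<Sum>s\<in>UNIV. \<Sum>a\<in>UNIV. P a s s' * occupancy P xi \<gamma> \<pi> $ (s, a)) = xi s'"
    using marg_eq[OF assms, of s'] by simp
qed

end


context mdp begin

definition mlam :: "real^('s\<times>'a) \<Rightarrow> 's \<Rightarrow> real" where
  "mlam l s = (\<Sum>b\<in>UNIV. l $ (s,b))"

definition pol :: "real^('s\<times>'a) \<Rightarrow> real^('s\<times>'a)" where
  "pol l = (\<chi> i. l $ i / mlam l (fst i))"

lemma polyD: assumes "l \<in> occ_polytope P xi \<gamma>"
  shows "0 \<le> l $ i"
    "mlam l s' = xi s' + \<gamma> * (\<Sum>s\<in>UNIV. \<Sum>a\<in>UNIV. P a s s' * l $ (s,a))"
proof -
  show "0 \<le> l $ i" using assms by (cases i) (auto simp: occ_polytope_def)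
  have "(\<Sum>a\<in>UNIV. l $ (s',a)) - \<gamma> * (\<Sum>s\<in>UNIV. \<Sum>a\<in>UNIV. P a s s' * l $ (s,a)) = xi s'"
    using assms by (auto simp: occ_polytope_def)
  thus "mlam l s' = xi s' + \<gamma> * (\<Sum>s\<in>UNIV. \<Sum>a\<in>UNIV. P a s s' * l $ (s,a))"
    unfolding mlam_def by linarith
qed

lemma mlam_ge: assumes "l \<in> occ_polytope P xi \<gamma>" shows "xi s \<le> mlam l s"
proof -
  have "0 \<le> (\<Sum>s'\<in>UNIV. \<Sum>a\<in>UNIV. P a s' s * l $ (s',a))"
    by (intro sum_nonneg mult_nonneg_nonneg P_nonneg polyD[OF assms])
  thus ?thesis using polyD(2)[OF assms, of s] gamma by (simp add: mult_nonneg_nonneg)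
qed

lemma mlam_pos: "l \<in> occ_polytope P xi \<gamma> \<Longrightarrow> 0 < mlam l s"
  using mlam_ge[of l s] xi_pos[of s] by linarith

lemma pol_in: assumes "l \<in> occ_polytope P xi \<gamma>" shows "pol l \<in> policies"
  unfolding policies_def pol_def
proof (intro CollectI conjI allI)
  fix s a show "0 \<le> (\<chi> i. l $ i / mlam l (fst i)) $ (s, a)"
    using polyD(1)[OF assms] mlam_pos[OF assms] by (simp add: divide_nonneg_pos)
next
  fix s
  have "(\<Sum>a\<in>UNIV. (\<chi> i. l $ i / mlam l (fst i)) $ (s, a)) = (\<Sum>a\<in>UNIV. l $ (s,a)) / mlam l s"
    by (simp add: sum_divide_distrib)
  also have "\<dots> = 1" using mlam_pos[OF assms, of s] by (simp add: mlam_def)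
  finally show "(\<Sum>a\<in>UNIV. (\<chi> i. l $ i / mlam l (fst i)) $ (s, a)) = 1" .
qed

lemma uniq: assumes pi: "\<pi> \<in> policies"
  and e: "\<And>s'. e s' = \<gamma> * (\<Sum>s\<in>UNIV. \<Sum>a\<in>UNIV. e s * \<pi> $ (s,a) * P a s s')"
  shows "e s = 0"
proof -
  have "(\<Sum>s'\<in>UNIV. \<bar>e s'\<bar>) \<le> (\<Sum>s'\<in>UNIV. \<gamma> * (\<Sum>s\<in>UNIV. \<Sum>a\<in>UNIV. \<bar>e s\<bar> * \<pi> $ (s,a) * P a s s'))"
  proof (rule sum_mono)
    fix s'
    have "\<bar>e s'\<bar> = \<gamma> * \<bar>\<Sum>s\<in>UNIV. \<Sum>a\<in>UNIV. e s * \<pi> $ (s,a) * P a s s'\<bar>"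
      using e[of s'] gamma by (simp add: abs_mult)
    also have "\<dots> \<le> \<gamma> * (\<Sum>s\<in>UNIV. \<Sum>a\<in>UNIV. \<bar>e s * \<pi> $ (s,a) * P a s s'\<bar>)"
      using gamma by (intro mult_left_mono order.trans[OF sum_abs] sum_mono sum_abs) auto
    also have "\<dots> = \<gamma> * (\<Sum>s\<in>UNIV. \<Sum>a\<in>UNIV. \<bar>e s\<bar> * \<pi> $ (s,a) * P a s s')"
      using policiesD(1)[OF pi] P_nonneg by (simp add: abs_mult)
    finally show "\<bar>e s'\<bar> \<le> \<gamma> * (\<Sum>s\<in>UNIV. \<Sum>a\<in>UNIV. \<bar>e s\<bar> * \<pi> $ (s,a) * P a s s')" .
  qed
  also have "\<dots> = \<gamma> * (\<Sum>s\<in>UNIV. \<Sum>a\<in>UNIV. \<Sum>s'\<in>UNIV. \<bar>e s\<bar> * \<pi> $ (s,a) * P a s s')"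
    by (simp add: sum_distrib_left[symmetric] sum_swap3)
  also have "\<dots> = \<gamma> * (\<Sum>s\<in>UNIV. \<bar>e s\<bar>)"
    using policiesD(2)[OF pi] by (simp add: sum_distrib_left[symmetric] P_stoch)
  finally have "(1 - \<gamma>) * (\<Sum>s\<in>UNIV. \<bar>e s\<bar>) \<le> 0" by (simp add: algebra_simps)
  hence "(\<Sum>s\<in>UNIV. \<bar>e s\<bar>) \<le> 0" using gamma by (simp add: mult_le_0_iff)
  hence "(\<Sum>s\<in>UNIV. \<bar>e s\<bar>) = 0" by (meson abs_ge_zero antisym sum_nonneg)
  hence "\<bar>e s\<bar> = 0" by (subst (asm) sum_nonneg_eq_0_iff) auto
  thus ?thesis by simp
qed

lemma marg_pol: assumes l: "l \<in> occ_polytope P xi \<gamma>" shows "marg (pol l) s = mlam l s"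
proof -
  have pi: "pol l \<in> policies" by (rule pol_in[OF l])
  have lp: "l $ (s,a) = mlam l s * pol l $ (s,a)" for s a
    using mlam_pos[OF l, of s] by (simp add: pol_def)
  show ?thesis
  proof (rule eq_iff_diff_eq_0[THEN iffD2], rule uniq[OF pi])
    fix s'
    have "mlam l s' = xi s' + \<gamma> * (\<Sum>s\<in>UNIV. \<Sum>a\<in>UNIV. mlam l s * pol l $ (s,a) * P a s s')"
      by (subst polyD(2)[OF l]) (simp add: lp[symmetric] mult.commute)
    thus "marg (pol l) s' - mlam l s' = \<gamma> * (\<Sum>s\<in>UNIV. \<Sum>a\<in>UNIV. (marg (pol l) s - mlam l s) * pol l $ (s,a) * P a s s')"
      by (subst marg_eq[OF pi]) (simp add: algebra_simps sum_subtractf)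
  qed
qed

lemma occ_pol: assumes l: "l \<in> occ_polytope P xi \<gamma>" shows "occupancy P xi \<gamma> (pol l) = l"
proof (rule vec_eq_iff[THEN iffD2], rule allI)
  fix i :: "'s\<times>'a"
  obtain s a where i: "i = (s,a)" by (cases i)
  show "occupancy P xi \<gamma> (pol l) $ i = l $ i"
    unfolding i using mlam_pos[OF l, of s]
    by (simp add: occ_eq[OF pol_in[OF l]] marg_pol[OF l]) (simp add: pol_def)
qed

end


lemma step2:
  fixes g p q :: "real^('s::finite\<times>'a::finite)" and r :: "'s \<Rightarrow> real"
  assumes p: "p \<in> policies" and q: "q \<in> policies"
    and r: "\<And>s. 0 \<le> r s" "\<And>s. r s \<le> C"
    and B: "\<And>p'. p' \<in> policies \<Longrightarrow> g \<bullet> (p' - p) \<le> B"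
  shows "g \<bullet> (\<chi> i. r (fst i) * (q $ i - p $ i)) \<le> C * B"
proof -
  define h where "h s = (\<Sum>a\<in>UNIV. g $ (s,a) * (q $ (s,a) - p $ (s,a)))" for s
  define p' :: "real^('s\<times>'a)" where "p' = (\<chi> i. if h (fst i) > 0 then q $ i else p $ i)"
  have row: "(\<Sum>a\<in>UNIV. (if 0 < h s then q$(s,a) else p$(s,a))) = 1" for s
    by (cases "0 < h s") (simp_all add: policiesD[OF p] policiesD[OF q])
  have p'in: "p' \<in> policies"
    using policiesD[OF p] policiesD[OF q] row by (auto simp: policies_def p'_def)
  have "g \<bullet> (p' - p) = (\<Sum>s\<in>UNIV. max (h s) 0)"
    unfolding inner_pairs h_def p'_def
    by (intro sum.cong refl) (auto simp: max_def)
  hence hB: "(\<Sum>s\<in>UNIV. max (h s) 0) \<le> B" using B[OF p'in] by simp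
  have "g \<bullet> (\<chi> i. r (fst i) * (q $ i - p $ i)) = (\<Sum>s\<in>UNIV. r s * h s)"
    unfolding inner_pairs h_def by (simp add: sum_distrib_left algebra_simps)
  also have "\<dots> \<le> (\<Sum>s\<in>UNIV. C * max (h s) 0)"
  proof (rule sum_mono)
    fix s
    have "r s * h s \<le> r s * max (h s) 0" using r(1)[of s] by (intro mult_left_mono) auto
    also have "\<dots> \<le> C * max (h s) 0" using r(2)[of s] by (intro mult_right_mono) auto
    finally show "r s * h s \<le> C * max (h s) 0" .
  qed
  also have "\<dots> = C * (\<Sum>s\<in>UNIV. max (h s) 0)" by (simp add: sum_distrib_left)
  also have "\<dots> \<le> C * B"
    using hB r(1) r(2) by (intro mult_left_mono) (auto intro: order.trans)
  finally show ?thesis .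
qed

context mdp begin

lemma occ_poly_convex:
  assumes x: "x \<in> occ_polytope P xi \<gamma>" and y: "y \<in> occ_polytope P xi \<gamma>" and t: "0 \<le> t" "t \<le> 1"
  shows "(1 - t) *\<^sub>R x + t *\<^sub>R y \<in> occ_polytope P xi \<gamma>"
  unfolding occ_polytope_def
proof (intro CollectI conjI allI)
  fix i show "0 \<le> ((1 - t) *\<^sub>R x + t *\<^sub>R y) $ i" using polyD(1)[OF x, of i] polyD(1)[OF y, of i] t by simp
next
  fix s'
  have ex: "mlam x s' = xi s' + \<gamma> * (\<Sum>s\<in>UNIV. \<Sum>a\<in>UNIV. P a s s' * x $ (s,a))" by (rule polyD(2)[OF x])
  have ey: "mlam y s' = xi s' + \<gamma> * (\<Sum>s\<in>UNIV. \<Sum>a\<in>UNIV. P a s s' * y $ (s,a))" by (rule polyD(2)[OF y])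
  have l1: "(\<Sum>a\<in>UNIV. ((1 - t) *\<^sub>R x + t *\<^sub>R y) $ (s', a)) = (1-t) * mlam x s' + t * mlam y s'"
    by (simp add: mlam_def sum.distrib sum_distrib_left)
  have l2: "(\<Sum>s\<in>UNIV. \<Sum>a\<in>UNIV. P a s s' * ((1 - t) *\<^sub>R x + t *\<^sub>R y) $ (s, a))
     = (1-t) * (\<Sum>s\<in>UNIV. \<Sum>a\<in>UNIV. P a s s' * x $ (s,a)) + t * (\<Sum>s\<in>UNIV. \<Sum>a\<in>UNIV. P a s s' * y $ (s,a))"
  proof -
    have "\<And>s a. P a s s' * ((1-t) *\<^sub>R x + t *\<^sub>R y)$(s,a) = (1-t) * (P a s s' * x$(s,a)) + t * (P a s s' * y$(s,a))"
      by (simp add: algebra_simps)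
    thus ?thesis by (simp only: sum.distrib sum_distrib_left[symmetric])
  qed
  show "(\<Sum>a\<in>UNIV. ((1 - t) *\<^sub>R x + t *\<^sub>R y) $ (s', a)) -
          \<gamma> * (\<Sum>s\<in>UNIV. \<Sum>a\<in>UNIV. P a s s' * ((1 - t) *\<^sub>R x + t *\<^sub>R y) $ (s, a)) = xi s'"
    unfolding l1 l2 ex ey by (simp add: algebra_simps)
qed

lemma mlam_occ: "\<pi> \<in> policies \<Longrightarrow> mlam (occupancy P xi \<gamma> \<pi>) s = marg \<pi> s"
  using policiesD(2)[of \<pi> s] by (simp add: mlam_def occ_eq sum_distrib_left[symmetric])

end


context mdp begin

lemma grad_dom:
  fixes F :: "real^('s\<times>'a) \<Rightarrow> real" and g \<pi> pistar :: "real^('s\<times>'a)"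
  assumes Fc: "occ_polytope P xi \<gamma> \<subseteq> U" "concave_on U F"
    and Rd: "((\<lambda>p. F (occupancy P xi \<gamma> p)) has_derivative (\<lambda>h. g \<bullet> h)) (at \<pi> within policies)"
    and pi: "\<pi> \<in> policies" and ps: "pistar \<in> policies"
    and B: "\<And>p'. p' \<in> policies \<Longrightarrow> g \<bullet> (p' - \<pi>) \<le> B"
    and C: "\<And>s. marg pistar s / xi s \<le> C"
  shows "F (occupancy P xi \<gamma> pistar) - F (occupancy P xi \<gamma> \<pi>) \<le> C * B"
proof -
  let ?R = "\<lambda>p. F (occupancy P xi \<gamma> p)"
  define \<delta> where "\<delta> = ?R pistar - ?R \<pi>"
  define m where "m = marg \<pi>"
  define m' where "m' = marg pistar"
  define K1 where "K1 = (\<Sum>i\<in>(UNIV::('s\<times>'a) set). m' (fst i) / xi (fst i))"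
  have m_ge: "xi s \<le> m s" for s unfolding m_def by (rule marg_ge[OF pi])
  have m'_ge: "xi s \<le> m' s" for s unfolding m'_def by (rule marg_ge[OF ps])
  have m'0: "0 \<le> m' s" for s using m'_ge[of s] xi_pos[of s] by linarith
  have K1: "0 \<le> K1" unfolding K1_def using m'0 xi_pos
    by (intro sum_nonneg divide_nonneg_pos) auto
  have der: "\<forall>e>0. \<exists>d>0. \<forall>y\<in>policies. norm (y - \<pi>) < d \<longrightarrow>
      norm (?R y - ?R \<pi> - g \<bullet> (y - \<pi>)) \<le> e * norm (y - \<pi>)"
    using Rd unfolding has_derivative_within_alt by simp
  have key: "\<delta> \<le> C * B + e * K1" if e: "e > 0" for e
  proof -
    obtain d where d: "d > 0" and dd: "\<And>y. y \<in> policies \<Longrightarrow> norm (y - \<pi>) < d \<Longrightarrow>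
      norm (?R y - ?R \<pi> - g \<bullet> (y - \<pi>)) \<le> e * norm (y - \<pi>)"
      using der e by blast
    define \<alpha> where "\<alpha> = min 1 (d / (K1 + 1))"
    have "0 < d / (K1 + 1)" using d K1 by simp
    hence \<alpha>: "0 < \<alpha>" "\<alpha> \<le> 1" by (auto simp: \<alpha>_def)
    have \<alpha>K: "\<alpha> * K1 < d"
    proof -
      have "\<alpha> * K1 \<le> d / (K1 + 1) * K1" unfolding \<alpha>_def by (intro mult_right_mono K1 min.cobounded2)
      also have "\<dots> < d" using d K1 by (simp add: field_simps)
      finally show ?thesis .
    qed
    define l where "l = (1 - \<alpha>) *\<^sub>R occupancy P xi \<gamma> \<pi> + \<alpha> *\<^sub>R occupancy P xi \<gamma> pistar"
    have lin: "l \<in> occ_polytope P xi \<gamma>"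
      unfolding l_def using \<alpha> by (intro occ_poly_convex occ_in pi ps) auto
    define pa where "pa = pol l"
    have pa_in: "pa \<in> policies" unfolding pa_def by (rule pol_in[OF lin])
    have Rpa: "?R pa = F l" unfolding pa_def by (simp add: occ_pol[OF lin])
    have conc: "(1 - \<alpha>) * ?R \<pi> + \<alpha> * ?R pistar \<le> F l"
      unfolding l_def using \<alpha> Fc occ_in[OF pi] occ_in[OF ps]
      by (intro concave_onD[OF Fc(2)]) auto
    have low: "\<alpha> * \<delta> \<le> ?R pa - ?R \<pi>"
      using conc Rpa unfolding \<delta>_def by (simp add: algebra_simps)
    define D where "D s = (1 - \<alpha>) * m s + \<alpha> * m' s" for s
    have Dge: "xi s \<le> D s" for s
    proof -
      have "(1 - \<alpha>) * xi s \<le> (1 - \<alpha>) * m s" using \<alpha> m_ge by (intro mult_left_mono) auto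
      moreover have "\<alpha> * xi s \<le> \<alpha> * m' s" using \<alpha> m'_ge by (intro mult_left_mono) auto
      ultimately show ?thesis unfolding D_def by (simp add: algebra_simps)
    qed
    have Dpos: "0 < D s" for s using Dge[of s] xi_pos[of s] by linarith
    have lc: "l $ (s,a) = (1 - \<alpha>) * (m s * \<pi> $ (s,a)) + \<alpha> * (m' s * pistar $ (s,a))" for s a
      unfolding l_def m_def m'_def by (simp add: occ_eq[OF pi] occ_eq[OF ps])
    have ml: "mlam l s = D s" for s
      using policiesD(2)[OF pi, of s] policiesD(2)[OF ps, of s]
      by (simp add: mlam_def lc D_def sum.distrib sum_distrib_left[symmetric])
    define w :: "real^('s\<times>'a)" where "w = (\<chi> i. (m' (fst i) / D (fst i)) * (pistar $ i - \<pi> $ i))"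
    have diff: "pa - \<pi> = \<alpha> *\<^sub>R w"
    proof (rule vec_eq_iff[THEN iffD2], rule allI)
      fix i :: "'s\<times>'a"
      obtain s a where i: "i = (s,a)" by (cases i)
      have "pa $ (s,a) = l $ (s,a) / D s" by (simp add: pa_def pol_def ml)
      also have "\<dots> = ((1 - \<alpha>) * (m s * \<pi> $ (s,a)) + \<alpha> * (m' s * pistar $ (s,a))) / D s" by (simp add: lc)
      finally have "pa $ (s,a) - \<pi> $ (s,a) = \<alpha> * (m' s / D s * (pistar $ (s,a) - \<pi> $ (s,a)))"
        using Dpos[of s] by (simp add: field_simps D_def)
      thus "(pa - \<pi>) $ i = (\<alpha> *\<^sub>R w) $ i" by (simp add: i w_def)
    qed
    have r: "0 \<le> m' s / D s" "m' s / D s \<le> C" for s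
    proof -
      show "0 \<le> m' s / D s" using m'_ge[of s] xi_pos[of s] Dpos[of s] by (simp add: divide_nonneg_pos)
      have "m' s / D s \<le> m' s / xi s"
        using m'_ge[of s] xi_pos[of s] Dge[of s] by (intro divide_left_mono) auto
      thus "m' s / D s \<le> C" using C[of s] unfolding m'_def by linarith
    qed
    have gw: "g \<bullet> w \<le> C * B"
      unfolding w_def by (rule step2[OF pi ps r B])
    have wn: "norm w \<le> K1"
    proof -
      have "norm w \<le> (\<Sum>i\<in>UNIV. \<bar>w $ i\<bar>)" by (rule norm_le_l1_cart)
      also have "\<dots> \<le> K1" unfolding K1_def
      proof (rule sum_mono)
        fix i :: "'s\<times>'a"
        obtain s a where i: "i = (s,a)" by (cases i)
        have "\<bar>pistar $ (s,a) - \<pi> $ (s,a)\<bar> \<le> 1"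
          using policiesD(1)[OF pi] policiesD(1)[OF ps] policies_le1[OF pi] policies_le1[OF ps]
          by (simp add: abs_le_iff) (smt (verit) policiesD(1)[OF pi, of s a] policiesD(1)[OF ps, of s a] policies_le1[OF pi, of s a] policies_le1[OF ps, of s a])
        note hle = this
        have "\<bar>w $ i\<bar> = (m' s / D s) * \<bar>pistar $ (s,a) - \<pi> $ (s,a)\<bar>"
          by (simp only: i w_def vec_lambda_beta fst_conv abs_mult abs_of_nonneg[OF r(1)[of s]])
        also have "\<dots> \<le> m' s / D s * 1"
          by (rule mult_left_mono[OF hle r(1)[of s]])
        also have "\<dots> \<le> m' s / xi s"
          using m'_ge[of s] xi_pos[of s] Dge[of s] by simp (intro divide_left_mono, auto)
        finally show "\<bar>w $ i\<bar> \<le> m' (fst i) / xi (fst i)" by (simp add: i)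
      qed
      finally show ?thesis .
    qed
    have nd: "norm (pa - \<pi>) \<le> \<alpha> * K1"
      using diff wn \<alpha> by (simp add: mult_left_mono)
    hence "norm (pa - \<pi>) < d" using \<alpha>K by linarith
    from dd[OF pa_in this] have "?R pa - ?R \<pi> - g \<bullet> (pa - \<pi>) \<le> e * norm (pa - \<pi>)" by simp
    also have "\<dots> \<le> e * (\<alpha> * K1)" using e nd by (intro mult_left_mono) auto
    finally have "\<alpha> * \<delta> \<le> \<alpha> * (g \<bullet> w) + \<alpha> * (e * K1)"
      using low diff by (simp add: algebra_simps)
    hence "\<alpha> * \<delta> \<le> \<alpha> * (C * B + e * K1)"
      using gw \<alpha> by (smt (verit) mult_left_mono distrib_left)
    thus ?thesis using \<alpha> by simp
  qed
  show ?thesis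
  proof (rule ccontr)
    assume "\<not> ?thesis"
    hence pos: "0 < \<delta> - C * B" unfolding \<delta>_def by simp
    define q where "q = (\<delta> - C * B) / 2"
    have q: "0 < q" using pos by (simp add: q_def)
    define e where "e = q / (K1 + 1)"
    have e: "e > 0" using q K1 by (simp add: e_def)
    have "e * K1 < \<delta> - C * B"
    proof -
      have "e * K1 \<le> e * (K1 + 1)" using e by simp
      also have "\<dots> = q" using K1 by (simp add: e_def)
      moreover have "\<delta> - C * B = 2 * q" by (simp add: q_def)
      ultimately show ?thesis using q by linarith
    qed
    with key[OF e] show False by linarith
  qed
qed

end


lemma descent:
  fixes R :: "'v::real_inner \<Rightarrow> real" and G :: "'v \<Rightarrow> 'v"
  assumes S: "convex S" and x: "x \<in> S" and y: "y \<in> S"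
    and der: "\<And>z. z \<in> S \<Longrightarrow> (R has_derivative (\<lambda>h. G z \<bullet> h)) (at z within S)"
    and lip: "L-lipschitz_on S G"
  shows "R x + G x \<bullet> (y - x) - L / 2 * (norm (y - x))^2 \<le> R y"
proof -
  define f where "f t = x + t *\<^sub>R (y - x)" for t :: real
  have fS: "f t \<in> S" if "t \<in> {0..1}" for t
  proof -
    have "f t = (1 - t) *\<^sub>R x + t *\<^sub>R y" by (simp add: f_def algebra_simps)
    thus ?thesis using convexD_alt[OF S x y, of t] that by simp
  qed
  have fder: "(f has_derivative (\<lambda>h. h *\<^sub>R (y - x))) (at t within {0..1})" for t
    unfolding f_def by (auto intro!: derivative_eq_intros)
  define c where "c = G x \<bullet> (y - x)"
  define n2 where "n2 = (norm (y - x))^2"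
  define \<psi> where "\<psi> t = R (f t) - t * c + L / 2 * t^2 * n2" for t
  have \<psi>der: "(\<psi> has_derivative (\<lambda>h. h * (G (f t) \<bullet> (y - x) - c + L * t * n2))) (at t within {0..1})"
    if t: "t \<in> {0..1}" for t
  proof -
    have "((\<lambda>t. R (f t)) has_derivative (\<lambda>h. G (f t) \<bullet> (h *\<^sub>R (y - x)))) (at t within {0..1})"
      by (rule has_derivative_in_compose2[of S R "\<lambda>z h. G z \<bullet> h", OF der _ t fder]) (use fS in auto)
    then show ?thesis unfolding \<psi>_def
      by (auto intro!: derivative_eq_intros simp: algebra_simps power2_eq_square)
  qed
  have cont: "continuous_on {0..1} \<psi>"
    by (rule has_derivative_continuous_on) (rule \<psi>der)
  have "\<psi> 0 \<le> \<psi> 1"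
  proof (rule DERIV_nonneg_imp_increasing_open[OF _ _ cont])
    fix t :: real assume t: "0 < t" "t < 1"
    have "(\<psi> has_derivative (\<lambda>h. h * (G (f t) \<bullet> (y - x) - c + L * t * n2))) (at t)"
      using \<psi>der[of t] t by (simp add: at_within_Icc_at)
    hence d: "(\<psi> has_real_derivative (G (f t) \<bullet> (y - x) - c + L * t * n2)) (at t)"
      unfolding has_field_derivative_def by (rule has_derivative_eq_rhs) (auto simp: fun_eq_iff)
    have L0: "0 \<le> L" using lip by (simp add: lipschitz_on_def)
    have "dist (G (f t)) (G x) \<le> L * dist (f t) x"
      using lip fS[of t] x t unfolding lipschitz_on_def by auto
    hence gl: "norm (G (f t) - G x) \<le> L * (t * norm (y - x))"
      using t by (simp add: dist_norm f_def)
    have "- ((G (f t) - G x) \<bullet> (y - x)) \<le> norm (G (f t) - G x) * norm (y - x)"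
      using Cauchy_Schwarz_ineq2[of "G (f t) - G x" "y - x"] by linarith
    also have "\<dots> \<le> L * (t * norm (y - x)) * norm (y - x)"
      by (intro mult_right_mono gl) auto
    also have "\<dots> = L * t * n2" by (simp add: n2_def power2_eq_square)
    finally have "0 \<le> G (f t) \<bullet> (y - x) - c + L * t * n2"
      by (simp add: c_def inner_diff_left)
    with d show "\<exists>y. (\<psi> has_real_derivative y) (at t) \<and> 0 \<le> y" by blast
  qed simp
  moreover have "\<psi> 0 = R x" by (simp add: \<psi>_def f_def)
  moreover have "\<psi> 1 = R y - c + L / 2 * n2" by (simp add: \<psi>_def f_def)
  ultimately show ?thesis by (simp add: c_def n2_def)
qed



lemma key_ineq:
  fixes N :: real assumes "3 \<le> N"
  shows "5 / (4 * (N + 1)) \<le> (5 / (4 * (N + 2)))^2 + 5 / (4 * (N + 2))"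
proof -
  define a where "a = 5 / (4 * (N + 2))"
  have n1: "N + 1 \<noteq> 0" "N + 2 \<noteq> 0" using assms by auto
  have "a + a * (1 / (N + 1)) = a * ((N + 2) / (N + 1))"
    using n1 by (simp add: field_simps)
  also have "\<dots> = (5 * (N + 2)) / ((4 * (N + 1)) * (N + 2))"
    unfolding a_def times_divide_times_eq by (simp only: ac_simps)
  also have "\<dots> = 5 / (4 * (N + 1))"
    using n1 by (rule_tac mult_divide_mult_cancel_right) simp
  finally have e: "5 / (4 * (N + 1)) = a + a * (1 / (N + 1))" by simp
  have "1 / (N + 1) \<le> a" using assms unfolding a_def by (simp add: field_simps)
  hence "a * (1 / (N + 1)) \<le> a * a" using assms unfolding a_def by (intro mult_left_mono) auto
  thus ?thesis unfolding e by (simp add: a_def power2_eq_square)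
qed

lemma rec_bound:
  fixes d :: "nat \<Rightarrow> real" and M :: real
  assumes M: "0 < M" and d0: "\<And>n. 0 \<le> d n"
    and step: "\<And>n. (d (Suc n))^2 \<le> M * (d n - d (Suc n))"
    and d1: "d 1 \<le> M / 4"
    and k: "1 \<le> k"
  shows "d k \<le> 5 * M / (4 * (real k + 1))"
proof -
  have mono: "d (Suc n) \<le> d n" for n
  proof -
    have "0 \<le> M * (d n - d (Suc n))" using step[of n] by (smt (verit) zero_le_power2)
    thus ?thesis using M by (simp add: zero_le_mult_iff)
  qed
  have le1: "d j \<le> d 1" if "1 \<le> j" for j
    using that
  proof (induction j rule: dec_induct)
    case base then show ?case by simp
  next
    case (step n) then show ?case using mono[of n] by simp
  qed
  show ?thesis
  proof (cases "k \<le> 3")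
    case True
    have "M / 4 \<le> 5 * M / (4 * (real k + 1))"
      using True M by (simp add: field_simps)
    thus ?thesis using le1[OF k] d1 by linarith
  next
    case False
    hence k3: "3 \<le> k" by simp
    show ?thesis using k3
    proof (induction k rule: dec_induct)
      case base
      have "d 3 \<le> M / 4" using le1[of 3] d1 by simp
      also have "\<dots> \<le> 5 * M / (4 * (real 3 + 1))" using M by simp
      finally show ?case .
    next
      case (step n)
      note IH = step.IH
      define N where "N = real n"
      have N3: "3 \<le> N" using step.hyps(1) by (simp add: N_def)
      define x where "x = d (Suc n)"
      define a where "a = 5 / (4 * (N + 2))"
      have a0: "0 < a" using N3 by (simp add: a_def)
      show ?case
      proof (rule ccontr)
        assume "\<not> ?case"
        hence xa: "M * a < x" by (simp add: x_def a_def N_def field_simps)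
        have "x^2 + M * x \<le> M * d n" using assms(3)[of n] by (simp add: x_def algebra_simps)
        also have "\<dots> \<le> M * (5 * M / (4 * (real n + 1)))" by (rule mult_left_mono[OF IH]) (use M in simp)
        also have "\<dots> = M * M * (5 / (4 * (N + 1)))" by (simp add: N_def)
        finally have up: "x^2 + M * x \<le> M * M * (5 / (4 * (N + 1)))" .
        have "(M * a)^2 + M * (M * a) < x^2 + M * x"
        proof -
          have "(M * a)^2 < x^2" using xa M a0 by (intro power_strict_mono) auto
          moreover have "M * (M * a) < M * x" using xa M by simp
          ultimately show ?thesis by linarith
        qed
        moreover have "M * M * (5 / (4 * (N + 1))) \<le> (M * a)^2 + M * (M * a)"
        proof -
          have "M * M * (5 / (4 * (N + 1))) \<le> M * M * (a^2 + a)"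
            using key_ineq[OF N3] M unfolding a_def by (intro mult_left_mono) auto
          thus ?thesis by (simp add: power2_eq_square algebra_simps)
        qed
        ultimately show False using up by linarith
      qed
    qed
  qed
qed



lemma final_arith:
  fixes L S A B K :: real assumes "B \<noteq> 0" "K + 1 \<noteq> 0"
  shows "5 * (16 * L * S * (A / B)) / (4 * (K + 1)) = 20 * L * S / (B * (K + 1)) * A"
proof -
  have "5 * (16 * L * S * (A / B)) / (4 * (K + 1)) = (5 * (16 * L * S * A)) / (B * (4 * (K + 1)))"
    by (simp only: times_divide_eq_right divide_divide_eq_left)
  also have "\<dots> = (20 * L * S * A) / (B * (K + 1))"
  proof -
    have nz: "B * (4 * (K + 1)) \<noteq> 0" "B * (K + 1) \<noteq> 0" using assms by simp_all
    show ?thesis by (subst frac_eq_eq[OF nz]) (simp add: algebra_simps)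
  qed
  also have "\<dots> = 20 * L * S / (B * (K + 1)) * A" by simp
  finally show ?thesis .
qed

theorem theorem5:
  fixes P :: "'a::finite \<Rightarrow> 's::finite \<Rightarrow> 's \<Rightarrow> real"
    and xi :: "'s \<Rightarrow> real" and \<gamma> :: real
    and F :: "real^('s \<times> 'a) \<Rightarrow> real"
    and gradR :: "real^('s \<times> 'a) \<Rightarrow> real^('s \<times> 'a)"
    and L :: real
    and pistar :: "real^('s \<times> 'a)"
    and pis :: "nat \<Rightarrow> real^('s \<times> 'a)"
    and k :: nat
  assumes P_nonneg: "\<And>a s s'. 0 \<le> P a s s'"
    and P_stoch: "\<And>a s. (\<Sum>s'\<in>UNIV. P a s s') = 1"
    and xi_pos: "\<And>s. 0 < xi s"
    and xi_sum: "(\<Sum>s\<in>UNIV. xi s) = 1"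
    and gamma: "0 < \<gamma>" "\<gamma> < 1"
    and F_concave: "\<exists>U. open U \<and> occ_polytope P xi \<gamma> \<subseteq> U \<and> concave_on U F"
    and R_grad: "\<And>\<pi>. \<pi> \<in> policies \<Longrightarrow>
       ((\<lambda>p. F (occupancy P xi \<gamma> p)) has_derivative (\<lambda>h. gradR \<pi> \<bullet> h)) (at \<pi> within policies)"
    and L_pos: "0 < L"
    and grad_lip: "L-lipschitz_on policies gradR"
    and pistar_in: "pistar \<in> policies"
    and pistar_max: "\<And>\<pi>. \<pi> \<in> policies \<Longrightarrow> F (occupancy P xi \<gamma> \<pi>) \<le> F (occupancy P xi \<gamma> pistar)"
    and pis0: "pis 0 \<in> policies"
    and pis_step: "\<And>n. pis (Suc n) = closest_point policies (pis n + (1 / L) *\<^sub>R gradR (pis n))"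
    and k: "1 \<le> k"
  shows "F (occupancy P xi \<gamma> pistar) - F (occupancy P xi \<gamma> (pis k))
     \<le> 20 * L * real CARD('s) / ((1 - \<gamma>)^2 * real (k + 1))
        * (Max (range (\<lambda>s. \<bar>visitation P xi \<gamma> pistar s / xi s\<bar>)))^2"
proof -
  interpret mdp P xi \<gamma>
    by unfold_locales (use P_nonneg P_stoch xi_pos xi_sum gamma in auto)
  let ?R = "\<lambda>p. F (occupancy P xi \<gamma> p)"
  obtain U where U: "occ_polytope P xi \<gamma> \<subseteq> U" "concave_on U F" using F_concave by blast
  define Mx where "Mx = Max (range (\<lambda>s. \<bar>visitation P xi \<gamma> pistar s / xi s\<bar>))"
  define C where "C = Mx / (1 - \<gamma>)"
  define S where "S = real CARD('s)"
  define Dm where "Dm = sqrt (2 * S)"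
  have S1: "1 \<le> S" unfolding S_def by simp
  have g1: "0 < 1 - \<gamma>" using gamma by simp
  have Mx_ge: "\<bar>visitation P xi \<gamma> pistar s / xi s\<bar> \<le> Mx" for s
    unfolding Mx_def by (rule Max_ge) auto
  have Cb: "marg pistar s / xi s \<le> C" for s
  proof -
    have "marg pistar s / xi s = (visitation P xi \<gamma> pistar s / xi s) / (1 - \<gamma>)"
    proof -
      have "(visitation P xi \<gamma> pistar s / xi s) / (1 - \<gamma>) = ((1 - \<gamma>) * (marg pistar s / xi s)) / (1 - \<gamma>)"
        by (simp add: visit_eq)
      also have "\<dots> = marg pistar s / xi s" using g1 by (intro nonzero_mult_div_cancel_left) simp
      finally show ?thesis by simp
    qed
    also have "\<dots> \<le> Mx / (1 - \<gamma>)"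
      using Mx_ge[of s] abs_ge_self[of "visitation P xi \<gamma> pistar s / xi s"] g1
      by (intro divide_right_mono) linarith+
    finally show ?thesis unfolding C_def .
  qed
  have C1: "1 \<le> C"
  proof -
    fix s :: 's
    have "(1 - \<gamma>) * xi s \<le> (1 - \<gamma>) * marg pistar s"
      using marg_ge[OF pistar_in, of s] g1 by (intro mult_left_mono) auto
    hence "1 - \<gamma> \<le> visitation P xi \<gamma> pistar s / xi s"
      using xi_pos[of s] by (simp add: visit_eq field_simps)
    hence "1 - \<gamma> \<le> Mx" using Mx_ge[of s] by linarith
    thus ?thesis unfolding C_def using g1 by simp
  qed
  have pin: "pis n \<in> policies" for n
  proof (induction n)
    case 0 show ?case by (rule pis0)
  next
    case (Suc n) show ?case
      unfolding pis_step by (rule closest_point_in_set[OF policies_closed policies_nonempty])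
  qed
  define \<delta> where "\<delta> n = ?R pistar - ?R (pis n)" for n
  define \<Delta> where "\<Delta> n = pis (Suc n) - pis n" for n
  have \<delta>0: "0 \<le> \<delta> n" for n using pistar_max[OF pin[of n]] by (simp add: \<delta>_def)
  have proj: "(pis n + (1 / L) *\<^sub>R gradR (pis n) - pis (Suc n)) \<bullet> (q - pis (Suc n)) \<le> 0"
    if "q \<in> policies" for n and q :: "real^('s\<times>'a)"
    unfolding pis_step by (rule closest_point_dot[OF policies_convex policies_closed that])
  have diam: "norm (q - p) \<le> Dm" if "q \<in> policies" "p \<in> policies" for p q :: "real^('s\<times>'a)"
    unfolding Dm_def S_def by (rule real_le_rsqrt) (rule policies_diam[OF that])
  have i: "L * (norm (\<Delta> n))^2 \<le> gradR (pis n) \<bullet> \<Delta> n" for n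
  proof -
    have "(pis n + (1 / L) *\<^sub>R gradR (pis n) - pis (Suc n)) \<bullet> (pis n - pis (Suc n)) \<le> 0"
      by (rule proj[OF pin])
    moreover have "(pis n + (1 / L) *\<^sub>R gradR (pis n) - pis (Suc n)) \<bullet> (pis n - pis (Suc n))
        = (norm (\<Delta> n))^2 - (1 / L) * (gradR (pis n) \<bullet> \<Delta> n)"
    proof -
      have e1: "pis n + (1 / L) *\<^sub>R gradR (pis n) - pis (Suc n) = (1 / L) *\<^sub>R gradR (pis n) - \<Delta> n"
        by (simp add: \<Delta>_def algebra_simps)
      have e2: "pis n - pis (Suc n) = - \<Delta> n" by (simp add: \<Delta>_def)
      show ?thesis unfolding e1 e2
        by (simp add: inner_diff_left power2_norm_eq_inner)
    qed
    ultimately have "(norm (\<Delta> n))^2 \<le> (1 / L) * (gradR (pis n) \<bullet> \<Delta> n)" by simp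
    hence "L * (norm (\<Delta> n))^2 \<le> L * ((1 / L) * (gradR (pis n) \<bullet> \<Delta> n))"
      using L_pos by (intro mult_left_mono) auto
    thus ?thesis using L_pos by simp
  qed
  have ii: "L / 2 * (norm (\<Delta> n))^2 \<le> \<delta> n - \<delta> (Suc n)" for n
  proof -
    have "?R (pis n) + gradR (pis n) \<bullet> (pis (Suc n) - pis n) - L / 2 * (norm (pis (Suc n) - pis n))^2
        \<le> ?R (pis (Suc n))"
      by (rule descent[OF policies_convex pin pin R_grad grad_lip])
    thus ?thesis using i[of n] unfolding \<delta>_def \<Delta>_def by simp
  qed
  have iii: "gradR (pis (Suc n)) \<bullet> (q - pis (Suc n)) \<le> 2 * L * Dm * norm (\<Delta> n)"
    if q: "q \<in> policies" for n and q :: "real^('s\<times>'a)"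
  proof -
    let ?g = "gradR (pis n)" and ?g' = "gradR (pis (Suc n))" and ?v = "q - pis (Suc n)"
    have nv: "norm ?v \<le> Dm" by (rule diam[OF q pin])
    have "(pis n + (1 / L) *\<^sub>R ?g - pis (Suc n)) \<bullet> ?v \<le> 0" by (rule proj[OF q])
    moreover have "(pis n + (1 / L) *\<^sub>R ?g - pis (Suc n)) \<bullet> ?v = (1 / L) * (?g \<bullet> ?v) - \<Delta> n \<bullet> ?v"
    proof -
      have e: "pis n + (1 / L) *\<^sub>R ?g - pis (Suc n) = (1 / L) *\<^sub>R ?g - \<Delta> n"
        by (simp add: \<Delta>_def algebra_simps)
      show ?thesis unfolding e by (simp add: inner_diff_left)
    qed
    ultimately have "(1 / L) * (?g \<bullet> ?v) \<le> \<Delta> n \<bullet> ?v" by simp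
    hence "L * ((1 / L) * (?g \<bullet> ?v)) \<le> L * (\<Delta> n \<bullet> ?v)" using L_pos by (intro mult_left_mono) auto
    hence a: "?g \<bullet> ?v \<le> L * (\<Delta> n \<bullet> ?v)" using L_pos by simp
    have "\<Delta> n \<bullet> ?v \<le> norm (\<Delta> n) * norm ?v" by (rule norm_cauchy_schwarz)
    also have "\<dots> \<le> norm (\<Delta> n) * Dm" by (intro mult_left_mono nv) auto
    finally have a2: "?g \<bullet> ?v \<le> L * (norm (\<Delta> n) * Dm)"
      using a L_pos by (smt (verit) mult_left_mono)
    have "dist ?g' ?g \<le> L * dist (pis (Suc n)) (pis n)"
      using grad_lip pin unfolding lipschitz_on_def by blast
    hence gl: "norm (?g' - ?g) \<le> L * norm (\<Delta> n)" by (simp add: dist_norm \<Delta>_def)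
    have "(?g' - ?g) \<bullet> ?v \<le> norm (?g' - ?g) * norm ?v" by (rule norm_cauchy_schwarz)
    also have "\<dots> \<le> (L * norm (\<Delta> n)) * Dm"
      using gl nv L_pos by (intro mult_mono) auto
    finally have b: "(?g' - ?g) \<bullet> ?v \<le> L * norm (\<Delta> n) * Dm" .
    have "?g' \<bullet> ?v = ?g \<bullet> ?v + (?g' - ?g) \<bullet> ?v" by (simp add: inner_diff_left)
    thus ?thesis using a2 b by (simp add: algebra_simps)
  qed
  have gd: "\<delta> (Suc n) \<le> C * (2 * L * Dm * norm (\<Delta> n))" for n
    unfolding \<delta>_def
    by (rule grad_dom[OF U R_grad[OF pin] pin pistar_in iii Cb])
  define M where "M = 16 * L * S * C^2"
  have M0: "0 < M" unfolding M_def using L_pos S1 C1 by simp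
  have Dm2: "Dm^2 = 2 * S" unfolding Dm_def using S1 by simp
  have stepM: "(\<delta> (Suc n))^2 \<le> M * (\<delta> n - \<delta> (Suc n))" for n
  proof -
    have "(\<delta> (Suc n))^2 \<le> (C * (2 * L * Dm * norm (\<Delta> n)))^2"
      using gd[of n] \<delta>0[of "Suc n"] by (intro power_mono) auto
    also have "\<dots> = 8 * C^2 * L * S * (L * (norm (\<Delta> n))^2)"
      using Dm2 by (simp add: power_mult_distrib power2_eq_square)
    also have "\<dots> \<le> 8 * C^2 * L * S * (2 * (\<delta> n - \<delta> (Suc n)))"
    proof (rule mult_left_mono)
      show "L * (norm (\<Delta> n))^2 \<le> 2 * (\<delta> n - \<delta> (Suc n))" using ii[of n] by simp
      show "0 \<le> 8 * C^2 * L * S" using L_pos S1 by simp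
    qed
    also have "\<dots> = M * (\<delta> n - \<delta> (Suc n))" by (simp add: M_def)
    finally show ?thesis .
  qed
  have d1: "\<delta> 1 \<le> M / 4"
  proof -
    have "\<delta> 1 \<le> C * (2 * L * Dm * norm (\<Delta> 0))" using gd[of 0] by simp
    also have "\<dots> \<le> C * (2 * L * Dm * Dm)"
      using diam[OF pin pin, of "Suc 0" 0] C1 L_pos Dm2
      by (intro mult_left_mono) (auto simp: \<Delta>_def Dm_def)
    also have "\<dots> = 4 * C * L * S" using Dm2 by (simp add: power2_eq_square)
    also have "\<dots> \<le> 4 * C^2 * L * S"
      using C1 L_pos S1 by (simp add: power2_eq_square)
    finally show ?thesis by (simp add: M_def algebra_simps)
  qed
  have "\<delta> k \<le> 5 * M / (4 * (real k + 1))"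
    by (rule rec_bound[OF M0 \<delta>0 stepM d1 k])
  also have "\<dots> = 20 * L * real CARD('s) / ((1 - \<gamma>)^2 * real (k + 1)) * Mx^2"
  proof -
    have "C^2 = Mx^2 / (1 - \<gamma>)^2" by (simp add: C_def power_divide)
    hence "5 * M / (4 * (real k + 1)) = 5 * (16 * L * S * (Mx^2 / (1 - \<gamma>)^2)) / (4 * (real k + 1))"
      by (simp add: M_def)
    also have "\<dots> = 20 * L * S / ((1 - \<gamma>)^2 * (real k + 1)) * Mx^2"
      by (rule final_arith) (use g1 in auto)
    finally show ?thesis by (simp add: S_def add.commute)
  qed
  finally show ?thesis unfolding \<delta>_def Mx_def .
qed


end
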